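(* Let $D$ be a digraph rooted at $r$ and let $v \in V(D) \setminus \{r\}$. For every $I \in \mathcal{G}_{D - rv}(v)$ and every $S \in \mathfrak{S}_D(v)$ there is an $\mathcal{R} \in \mathfrak{P}_D(v)$ orthogonal to $S$ with $I \subseteq E^+(\mathcal{R})$.
   Context: Digraphs have no loops or parallel edges; $D - rv$ denotes $D$ with the edge $rv$ deleted if present. For a vertex $v$ of a digraph $H$, $\mathrm{in}_H(v)$ is the set of edges with head $v$. An $(x,y)$-path is a directed path from $x$ to $y$; an $(x,y)$-path-system is a set of pairwise internally disjoint $(x,y)$-paths. $E^+(\mathcal{P})$ is the set of terminal edges of the paths in $\mathcal{P}$. For a rooted digraph $H$ with root $r$, $\mathcal{G}_H(v)$ is the set of all $I \subseteq \mathrm{in}_H(v)$ for which there is an $(r,v)$-path-system $\mathcal{P}$ in $H$ with $E^+(\mathcal{P}) = I$. For distinct $x,y$ with $xy \notin E$, an $(x,y)$-separation is a set $S \subseteq V \setminus\{x,y\}$ meeting every $(x,y)$-path. A set of paths $\mathcal{P}$ and a vertex set $S$ are orthogonal if each path of $\mathcal{P}$ meets $S$ in exactly one vertex and $S \subseteq \bigcup_{P \in \mathcal{P}} V(P)$. An $(x,y)$-path-system (resp. $(x,y)$-separation) is Erdős–Menger if there is an $(x,y)$-separation (resp. $(x,y)$-path-system) orthogonal to it. $\mathfrak{P}_D(v)$ and $\mathfrak{S}_D(v)$ denote the sets of Erdős–Menger $(r,v)$-path-systems and Erdős–Menger $(r,v)$-separations, respectively, in $D - rv$. *)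

theory Defs
  imports Main
begin

text \<open>A digraph is a vertex set V with an edge set E of ordered pairs
  (so no parallel edges), with E \<subseteq> V \<times> V and no loops.
  The vertex set may be infinite.\<close>

definition digraph :: "'a set \<Rightarrow> ('a \<times> 'a) set \<Rightarrow> bool" where
  "digraph V E \<longleftrightarrow> E \<subseteq> V \<times> V \<and> (\<forall>x. (x, x) \<notin> E)"

definition is_path :: "'a set \<Rightarrow> ('a \<times> 'a) set \<Rightarrow> 'a \<Rightarrow> 'a \<Rightarrow> 'a list \<Rightarrow> bool" where
  "is_path V E x y p \<longleftrightarrow> p \<noteq> [] \<and> hd p = x \<and> last p = y \<and> distinct p \<and> set p \<subseteq> V \<and>
     (\<forall>i. Suc i < length p \<longrightarrow> (p ! i, p ! Suc i) \<in> E)"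

definition in_edges :: "('a \<times> 'a) set \<Rightarrow> 'a \<Rightarrow> ('a \<times> 'a) set" where
  "in_edges E v = {e \<in> E. snd e = v}"

definition path_system :: "'a set \<Rightarrow> ('a \<times> 'a) set \<Rightarrow> 'a \<Rightarrow> 'a \<Rightarrow> 'a list set \<Rightarrow> bool" where
  "path_system V E x y P \<longleftrightarrow> (\<forall>p\<in>P. is_path V E x y p) \<and>
     (\<forall>p\<in>P. \<forall>q\<in>P. p \<noteq> q \<longrightarrow> set p \<inter> set q \<subseteq> {x, y})"

definition term_edges :: "'a list set \<Rightarrow> ('a \<times> 'a) set" where
  "term_edges P = (\<lambda>p. (last (butlast p), last p)) ` P"

definition gens :: "'a set \<Rightarrow> ('a \<times> 'a) set \<Rightarrow> 'a \<Rightarrow> 'a \<Rightarrow> ('a \<times> 'a) set set" where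
  "gens V E r v = {I. I \<subseteq> in_edges E v \<and> (\<exists>P. path_system V E r v P \<and> term_edges P = I)}"

definition separation :: "'a set \<Rightarrow> ('a \<times> 'a) set \<Rightarrow> 'a \<Rightarrow> 'a \<Rightarrow> 'a set \<Rightarrow> bool" where
  "separation V E x y S \<longleftrightarrow> x \<noteq> y \<and> (x, y) \<notin> E \<and> S \<subseteq> V - {x, y} \<and>
     (\<forall>p. is_path V E x y p \<longrightarrow> set p \<inter> S \<noteq> {})"

definition orthogonal :: "'a list set \<Rightarrow> 'a set \<Rightarrow> bool" where
  "orthogonal P S \<longleftrightarrow> (\<forall>p\<in>P. card (set p \<inter> S) = 1) \<and> S \<subseteq> (\<Union>p\<in>P. set p)"

definition EM_path_system :: "'a set \<Rightarrow> ('a \<times> 'a) set \<Rightarrow> 'a \<Rightarrow> 'a \<Rightarrow> 'a list set \<Rightarrow> bool" where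
  "EM_path_system V E x y P \<longleftrightarrow> path_system V E x y P \<and>
     (\<exists>S. separation V E x y S \<and> orthogonal P S)"

definition EM_separation :: "'a set \<Rightarrow> ('a \<times> 'a) set \<Rightarrow> 'a \<Rightarrow> 'a \<Rightarrow> 'a set \<Rightarrow> bool" where
  "EM_separation V E x y S \<longleftrightarrow> separation V E x y S \<and>
     (\<exists>P. path_system V E x y P \<and> orthogonal P S)"

text \<open>\<frak>P_D(v) and \<frak>S_D(v): taken in D - rv.\<close>
definition EM_paths :: "'a set \<Rightarrow> ('a \<times> 'a) set \<Rightarrow> 'a \<Rightarrow> 'a \<Rightarrow> 'a list set set" where
  "EM_paths V E r v = {P. EM_path_system V (E - {(r, v)}) r v P}"

definition EM_seps :: "'a set \<Rightarrow> ('a \<times> 'a) set \<Rightarrow> 'a \<Rightarrow> 'a \<Rightarrow> 'a set set" where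
  "EM_seps V E r v = {S. EM_separation V (E - {(r, v)}) r v S}"

end

theory Submission
  imports Defs
begin

definition pos :: "'a list \<Rightarrow> 'a \<Rightarrow> nat" where
  "pos xs x = length (takeWhile (\<lambda>z. z \<noteq> x) xs)"

lemma pos_less: "x \<in> set xs \<Longrightarrow> pos xs x < length xs"
  unfolding pos_def by (induction xs) auto

lemma nth_pos: "x \<in> set xs \<Longrightarrow> xs ! pos xs x = x"
  unfolding pos_def by (induction xs) auto

lemma pos_nth: "distinct xs \<Longrightarrow> i < length xs \<Longrightarrow> pos xs (xs ! i) = i"
proof (induction xs arbitrary: i)
  case Nil then show ?case by simp
next
  case (Cons a xs)
  show ?case
  proof (cases i)
    case 0 then show ?thesis by (simp add: pos_def)
  next
    case (Suc k)
    then have "xs ! k \<noteq> a" using Cons.prems by (auto simp: in_set_conv_nth)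
    then show ?thesis using Cons Suc by (simp add: pos_def)
  qed
qed

lemma pos_inj: "x \<in> set xs \<Longrightarrow> y \<in> set xs \<Longrightarrow> pos xs x = pos xs y \<Longrightarrow> x = y"
  by (metis nth_pos)

definition walk :: "('a \<times> 'a) set \<Rightarrow> 'a list \<Rightarrow> bool" where
  "walk E w \<longleftrightarrow> (\<forall>k. Suc k < length w \<longrightarrow> (w!k, w!Suc k) \<in> E)"

lemma concat_walk:
  assumes "i < length p" "j < length q" "p!i = q!j" "walk E p" "walk E q"
  shows "walk E (take i p @ drop j q)"
  unfolding walk_def
proof (intro allI impI)
  fix k assume k: "Suc k < length (take i p @ drop j q)"
  show "((take i p @ drop j q)!k, (take i p @ drop j q)!Suc k) \<in> E"
  proof (cases "Suc k < i")
    case True then show ?thesis using assms(1,4) by (simp add: nth_append walk_def)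
  next
    case False
    show ?thesis
    proof (cases "Suc k = i")
      case True
      then have "(take i p @ drop j q)!k = p!k" using assms(1) by (simp add: nth_append)
      moreover have "(take i p @ drop j q)!Suc k = q!j" using True assms by (simp add: nth_append)
      ultimately show ?thesis using assms True unfolding walk_def by auto
    next
      case False2: False
      then have ki: "k \<ge> i" using False by auto
      have "(take i p @ drop j q)!k = q!(j + (k - i))" using ki assms(1,2) k by (simp add: nth_append)
      moreover have "(take i p @ drop j q)!Suc k = q!Suc (j + (k - i))" using ki assms(1,2) k
        by (simp add: nth_append Suc_diff_le)
      moreover have "Suc (j + (k - i)) < length q" using k ki assms(1,2) by auto
      ultimately show ?thesis using assms(5) unfolding walk_def by auto
    qed
  qed
qed

lemma walk_to_path:
  "w \<noteq> [] \<Longrightarrow> hd w = x \<Longrightarrow> last w = y \<Longrightarrow> set w \<subseteq> V \<Longrightarrow> walk E w \<Longrightarrow>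
    \<exists>p. is_path V E x y p \<and> set p \<subseteq> set w"
proof (induction "length w" arbitrary: w rule: less_induct)
  case less
  show ?case
  proof (cases "distinct w")
    case True then show ?thesis using less.prems unfolding is_path_def walk_def by auto
  next
    case False
    then obtain i j where ij: "i < j" "j < length w" "w!i = w!j"
      by (metis distinct_conv_nth linorder_neqE_nat)
    define w' where "w' = take i w @ drop j w"
    have len: "length w' < length w" using ij unfolding w'_def by auto
    have ne: "w' \<noteq> []" using ij unfolding w'_def by auto
    have hd: "hd w' = x"
    proof (cases "i = 0")
      case True then show ?thesis using ij less.prems unfolding w'_def by (simp add: hd_drop_conv_nth hd_conv_nth)
    next
      case False then show ?thesis using ij less.prems unfolding w'_def by (simp add: hd_conv_nth nth_append)
    qed
    have lst: "last w' = y" using ij less.prems unfolding w'_def by simp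
    have st: "set w' \<subseteq> set w" unfolding w'_def using set_take_subset[of i w] set_drop_subset[of j w] by auto
    have wk: "walk E w'" unfolding w'_def using concat_walk[of i w j w E] ij less.prems by auto
    from less.hyps[OF len ne hd lst] st wk less.prems show ?thesis by blast
  qed
qed


lemma in_take_pos: "distinct p \<Longrightarrow> z \<in> set (take i p) \<longleftrightarrow> z \<in> set p \<and> pos p z < i"
proof
  assume d: "distinct p" and z: "z \<in> set (take i p)"
  then obtain k where k: "k < length (take i p)" "take i p ! k = z" by (auto simp: in_set_conv_nth)
  then have "p ! k = z" "k < i" "k < length p" by auto
  then show "z \<in> set p \<and> pos p z < i" using pos_nth[OF d] by auto
next
  assume "z \<in> set p \<and> pos p z < i"
  then show "z \<in> set (take i p)" using pos_less[of z p] nth_pos[of z p]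
    by (metis in_set_conv_nth length_take min_less_iff_conj nth_take)
qed

lemma in_drop_pos: "distinct p \<Longrightarrow> z \<in> set (drop j p) \<longleftrightarrow> z \<in> set p \<and> j \<le> pos p z"
proof
  assume d: "distinct p" and z: "z \<in> set (drop j p)"
  then obtain k where k: "k < length (drop j p)" "drop j p ! k = z" by (auto simp: in_set_conv_nth)
  then have "p ! (j + k) = z" "j + k < length p" by auto
  then show "z \<in> set p \<and> j \<le> pos p z" using pos_nth[OF d] by (metis le_add1 nth_mem)
next
  assume a: "z \<in> set p \<and> j \<le> pos p z"
  then have "drop j p ! (pos p z - j) = z" "pos p z - j < length (drop j p)"
    using pos_less[of z p] nth_pos[of z p] by auto
  then show "z \<in> set (drop j p)" by (metis nth_mem)
qed

lemma path_basics:
  assumes "is_path V E x y p" "x \<noteq> y"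
  shows "distinct p" "p!0 = x" "length p \<ge> 2" "p!(length p - 1) = y" "walk E p" "set p \<subseteq> V"
    "pos p x = 0" "pos p y = length p - 1" "x \<in> set p" "y \<in> set p"
proof -
  have ne: "p \<noteq> []" using assms unfolding is_path_def by auto
  show d: "distinct p" using assms unfolding is_path_def by auto
  show 0: "p!0 = x" using assms ne unfolding is_path_def by (simp add: hd_conv_nth)
  show l: "p!(length p - 1) = y" using assms ne unfolding is_path_def by (simp add: last_conv_nth)
  show "walk E p" "set p \<subseteq> V" using assms unfolding is_path_def walk_def by auto
  show "length p \<ge> 2"
  proof (rule ccontr)
    assume "\<not> 2 \<le> length p"
    then have "length p = 1" using ne by (cases p) (auto simp: not_less_eq_eq)
    then show False using 0 l assms(2) by auto
  qed
  then show "pos p x = 0" "pos p y = length p - 1" using pos_nth[OF d, of 0] pos_nth[OF d, of "length p - 1"] 0 l ne by auto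
  show "x \<in> set p" "y \<in> set p" using 0 l ne by (metis length_greater_0_conv nth_mem, metis diff_less length_greater_0_conv nth_mem zero_less_one)
qed


locale pym =
  fixes V :: "'a set" and F :: "('a \<times> 'a) set" and r v :: 'a and P Q :: "'a list set" and S :: "'a set"
  assumes sep: "separation V F r v S" and Pps: "path_system V F r v P"
    and orthP: "orthogonal P S" and Qps: "path_system V F r v Q"
begin

lemma rv: "r \<noteq> v" using sep unfolding separation_def by auto
lemma S_sub: "S \<subseteq> V - {r, v}" using sep unfolding separation_def by auto

lemma Ppath: "p \<in> P \<Longrightarrow> is_path V F r v p" using Pps unfolding path_system_def by auto
lemma Qpath: "q \<in> Q \<Longrightarrow> is_path V F r v q" using Qps unfolding path_system_def by auto

lemma Puniq: "p1 \<in> P \<Longrightarrow> p2 \<in> P \<Longrightarrow> y \<in> set p1 \<Longrightarrow> y \<in> set p2 \<Longrightarrow> y \<noteq> r \<Longrightarrow> y \<noteq> v \<Longrightarrow> p1 = p2"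
  using Pps unfolding path_system_def by blast
lemma Quniq: "q1 \<in> Q \<Longrightarrow> q2 \<in> Q \<Longrightarrow> y \<in> set q1 \<Longrightarrow> y \<in> set q2 \<Longrightarrow> y \<noteq> r \<Longrightarrow> y \<noteq> v \<Longrightarrow> q1 = q2"
  using Qps unfolding path_system_def by blast

lemma P_S: "p \<in> P \<Longrightarrow> \<exists>s. set p \<inter> S = {s}"
  using orthP unfolding orthogonal_def by (simp add: card_1_singleton_iff)

lemma S_cover: "s \<in> S \<Longrightarrow> \<exists>p\<in>P. s \<in> set p"
  using orthP unfolding orthogonal_def by auto

definition ts :: "'a list \<Rightarrow> nat" where
  "ts q = Max {i. i < length q \<and> q!i \<in> S}"

lemma ts_props:
  assumes q: "q \<in> Q"
  shows "ts q < length q" "q ! ts q \<in> S" "\<And>i. i < length q \<Longrightarrow> q!i \<in> S \<Longrightarrow> i \<le> ts q"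
    "0 < ts q" "ts q < length q - 1"
proof -
  have qp: "is_path V F r v q" using Qpath q .
  have "set q \<inter> S \<noteq> {}" using sep qp unfolding separation_def by auto
  then obtain i where i: "i < length q" "q!i \<in> S" by (auto simp: in_set_conv_nth)
  let ?A = "{i. i < length q \<and> q!i \<in> S}"
  have fin: "finite ?A" by auto
  have ne: "?A \<noteq> {}" using i by auto
  have "ts q \<in> ?A" unfolding ts_def using Max_in[OF fin ne] .
  then show t1: "ts q < length q" and t2: "q ! ts q \<in> S" by auto
  show "\<And>i. i < length q \<Longrightarrow> q!i \<in> S \<Longrightarrow> i \<le> ts q" unfolding ts_def using fin by auto
  have "q!0 = r" "q!(length q - 1) = v" using path_basics[OF qp rv] by auto
  moreover have "r \<notin> S" "v \<notin> S" using S_sub by auto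
  ultimately have "ts q \<noteq> 0" "ts q \<noteq> length q - 1" using t2 by metis+
  then show "0 < ts q" "ts q < length q - 1" using t1 by auto
qed

definition X0 :: "'a set" where
  "X0 = {y. y \<noteq> v \<and> (\<exists>q\<in>Q. y \<in> set q \<and> ts q \<le> pos q y) \<and> (\<exists>p\<in>P. y \<in> set p)}"

lemma X0_not_r: "y \<in> X0 \<Longrightarrow> y \<noteq> r"
proof
  assume y: "y \<in> X0" "y = r"
  then obtain q where q: "q \<in> Q" "y \<in> set q" "ts q \<le> pos q y" unfolding X0_def by auto
  then show False using path_basics(7)[OF Qpath[OF q(1)] rv] ts_props(4)[OF q(1)] y(2) by auto
qed

lemma X0_not_v: "y \<in> X0 \<Longrightarrow> y \<noteq> v" unfolding X0_def by auto

lemma X0_ts: "y \<in> X0 \<Longrightarrow> q \<in> Q \<Longrightarrow> y \<in> set q \<Longrightarrow> ts q \<le> pos q y"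
  using X0_not_r X0_not_v Quniq unfolding X0_def by blast

lemma keyL:
  assumes y: "y \<in> X0" and p: "p \<in> P" "y \<in> set p" and s: "s \<in> S" "s \<in> set p"
  shows "pos p s \<le> pos p y"
proof (rule ccontr)
  assume lt: "\<not> pos p s \<le> pos p y"
  have pp: "is_path V F r v p" using Ppath p(1) .
  note pb = path_basics[OF pp rv]
  obtain s0 where s0: "set p \<inter> S = {s0}" using P_S p(1) by auto
  have ss0: "s = s0" using s s0 by auto
  obtain q where q: "q \<in> Q" "y \<in> set q" "ts q \<le> pos q y" using y unfolding X0_def by auto
  have qp: "is_path V F r v q" using Qpath q(1) .
  note qb = path_basics[OF qp rv]
  note tq = ts_props[OF q(1)]
  show False
  proof (cases "pos q y = ts q")
    case True
    then have "y \<in> S" using tq(2) nth_pos[OF q(2)] by simp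
    then have "y = s" using s0 ss0 p by auto
    then show False using lt by simp
  next
    case False
    then have gt: "ts q < pos q y" using q(3) by simp
    define w where "w = take (pos p y) p @ drop (pos q y) q"
    have py0: "pos p y > 0" using pb(7) X0_not_r[OF y] nth_pos[OF p(2)] pb(2) by (metis gr0I)
    have wk: "walk F w" unfolding w_def
      by (rule concat_walk) (use pos_less[OF p(2)] pos_less[OF q(2)] nth_pos[OF p(2)] nth_pos[OF q(2)] pb qb in auto)
    have wne: "w \<noteq> []" using py0 pb(3) unfolding w_def by auto
    have pne: "p \<noteq> []" using pb(3) by auto
    have whd: "hd w = r" using py0 pb(2) pne unfolding w_def by (simp add: hd_append hd_conv_nth)
    have wl: "last w = v" using pos_less[OF q(2)] qp unfolding w_def is_path_def
      by simp
    have wV: "set w \<subseteq> V" using pb(6) qb(6) unfolding w_def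
      using set_take_subset[of "pos p y" p] set_drop_subset[of "pos q y" q] by auto
    obtain p' where p': "is_path V F r v p'" "set p' \<subseteq> set w" using walk_to_path[OF wne whd wl wV wk] by auto
    have "set p' \<inter> S \<noteq> {}" using sep p'(1) unfolding separation_def by auto
    then obtain z where z: "z \<in> set w" "z \<in> S" using p'(2) by auto
    show False
    proof (cases "z \<in> set (take (pos p y) p)")
      case True
      then have "z \<in> set p" "pos p z < pos p y" using in_take_pos[OF pb(1)] by auto
      moreover have "z = s0" using \<open>z \<in> set p\<close> z(2) s0 by auto
      ultimately show False using ss0 lt by auto
    next
      case False
      then have "z \<in> set (drop (pos q y) q)" using z unfolding w_def by auto
      then have "z \<in> set q" "pos q y \<le> pos q z" using in_drop_pos[OF qb(1)] by auto
      then show False using tq(3)[of "pos q z"] pos_less[of z q] nth_pos[of z q] z(2) gt by auto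
    qed
  qed
qed


definition RQ :: "'a set \<Rightarrow> 'a set" where
  "RQ Y = {x\<in>Y. \<exists>y\<in>Y. \<exists>q\<in>Q. x \<in> set q \<and> y \<in> set q \<and> pos q x < pos q y}"
definition RP :: "'a set \<Rightarrow> 'a set" where
  "RP Z = {x\<in>Z. \<exists>y\<in>Z. \<exists>p\<in>P. x \<in> set p \<and> y \<in> set p \<and> pos p y < pos p x}"
definition fY :: "'a set \<Rightarrow> 'a set" where
  "fY Y = X0 - RP (X0 - RQ Y)"

lemma fY_mono: "mono fY"
proof (rule monoI)
  fix A B :: "'a set" assume "A \<subseteq> B"
  then have "RQ A \<subseteq> RQ B" unfolding RQ_def by blast
  then have "X0 - RQ B \<subseteq> X0 - RQ A" by blast
  then have "RP (X0 - RQ B) \<subseteq> RP (X0 - RQ A)" unfolding RP_def by blast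
  then show "fY A \<subseteq> fY B" unfolding fY_def by blast
qed

definition Yf :: "'a set" where "Yf = lfp fY"
definition Zf :: "'a set" where "Zf = X0 - RQ Yf"
definition M :: "'a set" where "M = Yf \<inter> Zf"

lemma Yf_eq: "Yf = X0 - RP Zf"
  using lfp_unfold[OF fY_mono] unfolding Yf_def Zf_def fY_def by simp

lemma M_X0: "M \<subseteq> X0" unfolding M_def Zf_def by auto

lemma MQ: "m1 \<in> M \<Longrightarrow> m2 \<in> M \<Longrightarrow> q \<in> Q \<Longrightarrow> m1 \<in> set q \<Longrightarrow> m2 \<in> set q \<Longrightarrow> m1 = m2"
proof (rule ccontr)
  assume a: "m1 \<in> M" "m2 \<in> M" "q \<in> Q" "m1 \<in> set q" "m2 \<in> set q" "m1 \<noteq> m2"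
  then have "pos q m1 \<noteq> pos q m2" using pos_inj by metis
  then consider "pos q m1 < pos q m2" | "pos q m2 < pos q m1" by linarith
  then show False
  proof cases
    case 1 then have "m1 \<in> RQ Yf" using a unfolding RQ_def M_def by blast
    then show False using a unfolding M_def Zf_def by blast
  next
    case 2 then have "m2 \<in> RQ Yf" using a unfolding RQ_def M_def by blast
    then show False using a unfolding M_def Zf_def by blast
  qed
qed

lemma MP: "m1 \<in> M \<Longrightarrow> m2 \<in> M \<Longrightarrow> p \<in> P \<Longrightarrow> m1 \<in> set p \<Longrightarrow> m2 \<in> set p \<Longrightarrow> m1 = m2"
proof (rule ccontr)
  assume a: "m1 \<in> M" "m2 \<in> M" "p \<in> P" "m1 \<in> set p" "m2 \<in> set p" "m1 \<noteq> m2"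
  then have "pos p m1 \<noteq> pos p m2" using pos_inj by metis
  then consider "pos p m1 < pos p m2" | "pos p m2 < pos p m1" by linarith
  then show False
  proof cases
    case 1 then have "m2 \<in> RP Zf" using a unfolding RP_def M_def by blast
    then show False using a Yf_eq unfolding M_def by blast
  next
    case 2 then have "m1 \<in> RP Zf" using a unfolding RP_def M_def by blast
    then show False using a Yf_eq unfolding M_def by blast
  qed
qed

lemma stable:
  assumes x: "x \<in> X0" "x \<notin> M" and q: "q \<in> Q" "x \<in> set q" and p: "p \<in> P" "x \<in> set p"
  shows "(\<exists>m\<in>M. m \<in> set q \<and> pos q x < pos q m) \<or> (\<exists>m\<in>M. m \<in> set p \<and> pos p m < pos p x)"
proof (cases "x \<in> Yf")
  case False
  then have "x \<in> RP Zf" using Yf_eq x by blast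
  then obtain y p' where y: "y \<in> Zf" "p' \<in> P" "x \<in> set p'" "y \<in> set p'" "pos p' y < pos p' x"
    unfolding RP_def by blast
  have pp: "p' = p" using Puniq[OF y(2) p(1) y(3) p(2)] X0_not_r X0_not_v x by blast
  define G where "G = Zf \<inter> set p"
  have yG: "y \<in> G" using y pp unfolding G_def by auto
  obtain m where m: "m \<in> G" "\<forall>z. z \<in> G \<longrightarrow> pos p m \<le> pos p z"
    using ex_has_least_nat[of "\<lambda>z. z \<in> G" y "pos p"] yG by blast
  have "m \<notin> RP Zf"
  proof
    assume "m \<in> RP Zf"
    then obtain y' p'' where y': "y' \<in> Zf" "p'' \<in> P" "m \<in> set p''" "y' \<in> set p''" "pos p'' y' < pos p'' m"
      unfolding RP_def by blast
    have mX: "m \<in> X0" using m unfolding G_def Zf_def by auto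
    have "p'' = p" using Puniq[OF y'(2) p(1) y'(3)] m(1) X0_not_r[OF mX] X0_not_v[OF mX] unfolding G_def by blast
    then show False using m y' unfolding G_def by force
  qed
  then have "m \<in> M" using m Yf_eq unfolding M_def G_def Zf_def by blast
  then show ?thesis using m(1) m(2) yG y(5) pp unfolding G_def by force
next
  case True
  then have "x \<notin> Zf" using x unfolding M_def by blast
  then have "x \<in> RQ Yf" using x unfolding Zf_def by blast
  then obtain y q' where y: "y \<in> Yf" "q' \<in> Q" "x \<in> set q'" "y \<in> set q'" "pos q' x < pos q' y"
    unfolding RQ_def by blast
  have qq: "q' = q" using Quniq[OF y(2) q(1) y(3) q(2)] X0_not_r X0_not_v x by blast
  define G where "G = Yf \<inter> set q"
  have yG: "y \<in> G" using y qq unfolding G_def by auto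
  have fin: "finite G" unfolding G_def by auto
  define k where "k = Max (pos q ` G)"
  have "k \<in> pos q ` G" unfolding k_def using Max_in fin yG by blast
  then obtain m where m: "m \<in> G" "pos q m = k" by auto
  have mmax: "\<forall>z\<in>G. pos q z \<le> pos q m" using m(2) fin unfolding k_def by auto
  have YX: "Yf \<subseteq> X0" using Yf_eq by auto
  have "m \<notin> RQ Yf"
  proof
    assume "m \<in> RQ Yf"
    then obtain y' q'' where y': "y' \<in> Yf" "q'' \<in> Q" "m \<in> set q''" "y' \<in> set q''" "pos q'' m < pos q'' y'"
      unfolding RQ_def by blast
    have mX: "m \<in> X0" using m YX unfolding G_def by auto
    have "q'' = q" using Quniq[OF y'(2) q(1) y'(3)] m(1) X0_not_r[OF mX] X0_not_v[OF mX] unfolding G_def by blast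
    then show False using mmax y' unfolding G_def by force
  qed
  then have "m \<in> M" using m YX unfolding M_def G_def Zf_def by blast
  then show ?thesis using m(1) mmax yG y(5) qq unfolding G_def by force
qed

lemma Mcover: "q \<in> Q \<Longrightarrow> \<exists>m\<in>M. m \<in> set q"
proof (rule ccontr)
  assume q: "q \<in> Q" and nm: "\<not> (\<exists>m\<in>M. m \<in> set q)"
  note tq = ts_props[OF q]
  define s where "s = q ! ts q"
  have sS: "s \<in> S" using tq unfolding s_def by auto
  have sq: "s \<in> set q" "pos q s = ts q" using tq path_basics(1)[OF Qpath[OF q] rv] pos_nth unfolding s_def by auto
  obtain p where p: "p \<in> P" "s \<in> set p" using S_cover sS by blast
  have sX: "s \<in> X0" using sS S_sub sq p q unfolding X0_def by auto
  have "s \<notin> M" using nm sq by auto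
  from stable[OF sX this q sq(1) p] nm obtain m where m: "m \<in> M" "m \<in> set p" "pos p m < pos p s" by auto
  have "pos p s \<le> pos p m" using keyL[of m p s] m M_X0 p sS by auto
  then show False using m by simp
qed


definition matched :: "'a list \<Rightarrow> bool" where "matched p \<longleftrightarrow> (\<exists>m\<in>M. m \<in> set p)"
definition mp :: "'a list \<Rightarrow> 'a" where "mp p = (SOME m. m \<in> M \<and> m \<in> set p)"
definition qm :: "'a \<Rightarrow> 'a list" where "qm m = (SOME q. q \<in> Q \<and> m \<in> set q)"
definition newp :: "'a list \<Rightarrow> 'a list" where
  "newp p = (if matched p then take (pos p (mp p)) p @ drop (pos (qm (mp p)) (mp p)) (qm (mp p)) else p)"

lemma match_facts:
  assumes p: "p \<in> P" "matched p"
  shows "mp p \<in> M" "mp p \<in> set p" "qm (mp p) \<in> Q" "mp p \<in> set (qm (mp p))"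
    "ts (qm (mp p)) \<le> pos (qm (mp p)) (mp p)" "\<And>m'. m' \<in> M \<Longrightarrow> m' \<in> set p \<Longrightarrow> m' = mp p"
    "\<And>m'. m' \<in> M \<Longrightarrow> m' \<in> set (qm (mp p)) \<Longrightarrow> m' = mp p" "mp p \<in> X0"
proof -
  show m1: "mp p \<in> M" "mp p \<in> set p" using p(2) unfolding matched_def mp_def by (metis (mono_tags, lifting) someI)+
  then show mX: "mp p \<in> X0" using M_X0 by auto
  then have "\<exists>q. q \<in> Q \<and> mp p \<in> set q" unfolding X0_def by auto
  then show q1: "qm (mp p) \<in> Q" "mp p \<in> set (qm (mp p))" unfolding qm_def by (metis (mono_tags, lifting) someI)+
  show "ts (qm (mp p)) \<le> pos (qm (mp p)) (mp p)" using X0_ts mX q1 by auto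
  show "\<And>m'. m' \<in> M \<Longrightarrow> m' \<in> set p \<Longrightarrow> m' = mp p" using MP m1 p by blast
  show "\<And>m'. m' \<in> M \<Longrightarrow> m' \<in> set (qm (mp p)) \<Longrightarrow> m' = mp p" using MQ m1 q1 by blast
qed

lemma cross:
  assumes p1: "p1 \<in> P" "y \<in> set p1" and h: "\<forall>m\<in>M. m \<in> set p1 \<longrightarrow> pos p1 y < pos p1 m"
    and q2: "q2 \<in> Q" "m2 \<in> M" "m2 \<in> set q2" "y \<in> set q2" "pos q2 m2 < pos q2 y" and yv: "y \<noteq> v"
  shows False
proof -
  have "m2 \<in> X0" using q2 M_X0 by auto
  then have "ts q2 \<le> pos q2 m2" using X0_ts q2 by auto
  then have yX: "y \<in> X0" using yv q2 p1 unfolding X0_def by force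
  have yM: "y \<notin> M" using MQ[of y m2 q2] q2 by auto
  from stable[OF yX yM q2(1) q2(4) p1] show False
  proof
    assume "\<exists>m\<in>M. m \<in> set q2 \<and> pos q2 y < pos q2 m"
    then obtain m where "m \<in> M" "m \<in> set q2" "pos q2 y < pos q2 m" by blast
    then show False using MQ[of m m2 q2] q2 by auto
  next
    assume "\<exists>m\<in>M. m \<in> set p1 \<and> pos p1 m < pos p1 y"
    then show False using h by force
  qed
qed

lemma newp_path: assumes p: "p \<in> P" shows "is_path V F r v (newp p)"
proof (cases "matched p")
  case False then show ?thesis using Ppath p unfolding newp_def by simp
next
  case True
  note mf = match_facts[OF p True]
  define m where "m = mp p"
  define q where "q = qm m"
  have pp: "is_path V F r v p" using Ppath p .
  note pb = path_basics[OF pp rv]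
  have qp: "is_path V F r v q" using Qpath mf(3) unfolding q_def m_def .
  note qb = path_basics[OF qp rv]
  have mp': "m \<in> set p" "m \<in> set q" "m \<in> X0" unfolding m_def q_def using mf(2) mf(4) mf(8) by auto
  have np: "newp p = take (pos p m) p @ drop (pos q m) q" using True unfolding newp_def m_def q_def by simp
  have "pos p m \<noteq> 0"
  proof
    assume "pos p m = 0"
    then show False using nth_pos[OF mp'(1)] pb(2) X0_not_r[OF mp'(3)] by simp
  qed
  then have i0: "pos p m > 0" by simp
  have pne: "p \<noteq> []" using pb(3) by auto
  have wk: "walk F (newp p)" unfolding np
    by (rule concat_walk) (use pos_less[OF mp'(1)] pos_less[OF mp'(2)] nth_pos[OF mp'(1)] nth_pos[OF mp'(2)] pb qb in auto)
  have hd: "hd (newp p) = r" using i0 pb(2) pne unfolding np by (simp add: hd_append hd_conv_nth)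
  have lst: "last (newp p) = v" using pos_less[OF mp'(2)] qp unfolding np is_path_def by simp
  have ne: "newp p \<noteq> []" using pos_less[OF mp'(2)] unfolding np by simp
  have V: "set (newp p) \<subseteq> V" using pb(6) qb(6) unfolding np
      using set_take_subset[of "pos p m" p] set_drop_subset[of "pos q m" q] by auto
  have dis: "set (take (pos p m) p) \<inter> set (drop (pos q m) q) = {}"
  proof (rule ccontr)
    assume "set (take (pos p m) p) \<inter> set (drop (pos q m) q) \<noteq> {}"
    then obtain y where y: "y \<in> set (take (pos p m) p)" "y \<in> set (drop (pos q m) q)" by blast
    then have y1: "y \<in> set p" "pos p y < pos p m" "y \<in> set q" "pos q m \<le> pos q y"
      using in_take_pos[OF pb(1)] in_drop_pos[OF qb(1)] by auto
    have "y \<noteq> m" using y1 by auto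
    then have "pos q m \<noteq> pos q y" using y1 pos_inj[of y q m] mp' by metis
    then have y2: "pos q m < pos q y" using y1 by simp
    have "y \<noteq> v" using y1 pb(8) pos_less[OF mp'(1)] by auto
    moreover have "\<forall>m'\<in>M. m' \<in> set p \<longrightarrow> pos p y < pos p m'" using mf(6) y1 unfolding m_def by auto
    ultimately show False using cross[OF p y1(1) _ mf(3) mf(1) mf(4)] y1 y2 unfolding m_def q_def by simp
  qed
  have "distinct (newp p)" unfolding np using dis pb(1) qb(1) by simp
  then show ?thesis using wk hd lst ne V unfolding is_path_def walk_def by auto
qed


lemma newp_S: assumes p: "p \<in> P" and s: "s \<in> S" "s \<in> set p" shows "set (newp p) \<inter> S = {s}"
proof -
  obtain s0 where s0: "set p \<inter> S = {s0}" using P_S p by auto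
  have ss0: "s = s0" using s s0 by auto
  show ?thesis
  proof (cases "matched p")
    case False then show ?thesis using s0 ss0 unfolding newp_def by simp
  next
    case True
    note mf = match_facts[OF p True]
    define m where "m = mp p"
    define q where "q = qm m"
    have pp: "is_path V F r v p" using Ppath p .
    note pb = path_basics[OF pp rv]
    have qQ: "q \<in> Q" using mf(3) unfolding q_def m_def .
    have qp: "is_path V F r v q" using Qpath qQ .
    note qb = path_basics[OF qp rv]
    have mp': "m \<in> set p" "m \<in> set q" "m \<in> X0" "ts q \<le> pos q m"
      unfolding m_def q_def using mf(2) mf(4) mf(8) mf(5) by auto
    have np: "newp p = take (pos p m) p @ drop (pos q m) q" using True unfolding newp_def m_def q_def by simp
    have le: "pos p s \<le> pos p m" using keyL[OF mp'(3) p mp'(1) s] .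
    have sub: "set (newp p) \<inter> S \<subseteq> {s}"
    proof
      fix z assume z: "z \<in> set (newp p) \<inter> S"
      show "z \<in> {s}"
      proof (cases "z \<in> set (take (pos p m) p)")
        case True
        then have "z \<in> set p" using in_take_pos[OF pb(1)] by auto
        then show ?thesis using z s0 ss0 by auto
      next
        case False
        then have "z \<in> set (drop (pos q m) q)" using z np by auto
        then have z1: "z \<in> set q" "pos q m \<le> pos q z" using in_drop_pos[OF qb(1)] by auto
        have "pos q z \<le> ts q" using ts_props(3)[OF qQ, of "pos q z"] pos_less[OF z1(1)] nth_pos[OF z1(1)] z by auto
        then have "pos q z = pos q m" using z1 mp'(4) by simp
        then have "z = m" using pos_inj[OF z1(1) mp'(2)] by simp
        then show ?thesis using mp'(1) z s0 ss0 by auto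
      qed
    qed
    have "s \<in> set (newp p)"
    proof (cases "pos p s < pos p m")
      case True
      then show ?thesis using in_take_pos[OF pb(1)] s np by auto
    next
      case False
      then have "pos p s = pos p m" using le by simp
      then have "s = m" using pos_inj[OF s(2) mp'(1)] by simp
      then show ?thesis using in_drop_pos[OF qb(1)] mp'(2) np by auto
    qed
    then show ?thesis using sub s by auto
  qed
qed

lemma newp_parts:
  assumes p: "p \<in> P" and y: "y \<in> set (newp p)"
  shows "(y \<in> set p \<and> (\<forall>m\<in>M. m \<in> set p \<longrightarrow> pos p y < pos p m)) \<or>
    (matched p \<and> y \<in> set (qm (mp p)) \<and> pos (qm (mp p)) (mp p) \<le> pos (qm (mp p)) y)"
proof (cases "matched p")
  case False then show ?thesis using y unfolding newp_def matched_def by auto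
next
  case True
  note mf = match_facts[OF p True]
  have pp: "is_path V F r v p" using Ppath p .
  note pb = path_basics[OF pp rv]
  have qp: "is_path V F r v (qm (mp p))" using Qpath mf(3) .
  note qb = path_basics[OF qp rv]
  have np: "newp p = take (pos p (mp p)) p @ drop (pos (qm (mp p)) (mp p)) (qm (mp p))"
    using True unfolding newp_def by simp
  show ?thesis
  proof (cases "y \<in> set (take (pos p (mp p)) p)")
    case True
    then have "y \<in> set p" "pos p y < pos p (mp p)" using in_take_pos[OF pb(1)] by auto
    then show ?thesis using mf(6) by auto
  next
    case False
    then have "y \<in> set (drop (pos (qm (mp p)) (mp p)) (qm (mp p)))" using y np by auto
    then show ?thesis using in_drop_pos[OF qb(1)] \<open>matched p\<close> by auto
  qed
qed

lemma HT:
  assumes p1: "p1 \<in> P" "y \<in> set p1" "\<forall>m\<in>M. m \<in> set p1 \<longrightarrow> pos p1 y < pos p1 m"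
    and p2: "p2 \<in> P" "matched p2" "y \<in> set (qm (mp p2))" "pos (qm (mp p2)) (mp p2) \<le> pos (qm (mp p2)) y"
    and ne: "p1 \<noteq> p2" and yv: "y \<noteq> v"
  shows False
proof -
  note mf = match_facts[OF p2(1,2)]
  show False
  proof (cases "y = mp p2")
    case True
    then have "y \<in> set p2" using mf(2) by simp
    then show False using Puniq[OF p1(1) p2(1) p1(2)] True X0_not_r[OF mf(8)] X0_not_v[OF mf(8)] ne by auto
  next
    case False
    then have "pos (qm (mp p2)) (mp p2) \<noteq> pos (qm (mp p2)) y" using pos_inj[OF mf(4) p2(3)] by metis
    then have "pos (qm (mp p2)) (mp p2) < pos (qm (mp p2)) y" using p2(4) by simp
    then show False using cross[OF p1 mf(3) mf(1) mf(4) p2(3) _ yv] by simp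
  qed
qed

lemma newp_disj:
  assumes p: "p1 \<in> P" "p2 \<in> P" "p1 \<noteq> p2" and y: "y \<in> set (newp p1)" "y \<in> set (newp p2)"
    and yr: "y \<noteq> r" and yv: "y \<noteq> v"
  shows False
proof -
  from newp_parts[OF p(1) y(1)] newp_parts[OF p(2) y(2)] show False
  proof (elim disjE conjE)
    assume "y \<in> set p1" "y \<in> set p2"
    then show False using Puniq[OF p(1) p(2)] yr yv p(3) by blast
  next
    assume a: "y \<in> set p1" "\<forall>m\<in>M. m \<in> set p1 \<longrightarrow> pos p1 y < pos p1 m" "matched p2" "y \<in> set (qm (mp p2))"
      "pos (qm (mp p2)) (mp p2) \<le> pos (qm (mp p2)) y"
    show False using HT[OF p(1) a(1,2) p(2) a(3,4,5) p(3) yv] .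
  next
    assume a: "y \<in> set p2" "\<forall>m\<in>M. m \<in> set p2 \<longrightarrow> pos p2 y < pos p2 m" "matched p1" "y \<in> set (qm (mp p1))"
      "pos (qm (mp p1)) (mp p1) \<le> pos (qm (mp p1)) y"
    show False using HT[OF p(2) a(1,2) p(1) a(3,4,5) _ yv] p(3) by auto
  next
    assume a: "matched p1" "y \<in> set (qm (mp p1))" "matched p2" "y \<in> set (qm (mp p2))"
    note m1 = match_facts[OF p(1) a(1)]
    note m2 = match_facts[OF p(2) a(3)]
    have "qm (mp p1) = qm (mp p2)" using Quniq[OF m1(3) m2(3) a(2) a(4) yr yv] .
    then have "mp p1 = mp p2" using MQ[OF m1(1) m2(1) m1(3) m1(4)] m2(4) by simp
    then show False using Puniq[OF p(1) p(2) m1(2)] m2(2) X0_not_r[OF m1(8)] X0_not_v[OF m1(8)] p(3) by auto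
  qed
qed

lemma newp_term:
  assumes q: "q \<in> Q" shows "\<exists>p\<in>P. last (butlast (newp p)) = last (butlast q) \<and> last (newp p) = last q"
proof -
  obtain m where m: "m \<in> M" "m \<in> set q" using Mcover q by blast
  have mX: "m \<in> X0" using m M_X0 by auto
  then obtain p where p: "p \<in> P" "m \<in> set p" unfolding X0_def by auto
  have mt: "matched p" using m p unfolding matched_def by auto
  note mf = match_facts[OF p(1) mt]
  have mm: "mp p = m" using mf(6)[OF m(1) p(2)] by simp
  have qq: "qm m = q" using Quniq[OF mf(3) q] mf(4) m(2) X0_not_r[OF mX] X0_not_v[OF mX] mm by auto
  have np: "newp p = take (pos p m) p @ drop (pos q m) q" using mt mm qq unfolding newp_def by simp
  have qp: "is_path V F r v q" using Qpath q .
  note qb = path_basics[OF qp rv]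
  have j1: "pos q m < length q" using pos_less[OF m(2)] .
  have "pos q m \<noteq> length q - 1" using nth_pos[OF m(2)] qb(4) X0_not_v[OF mX] by metis
  then have j: "pos q m < length (butlast q)" using j1 by simp
  have dne: "drop (pos q m) q \<noteq> []" using j1 by simp
  have "butlast (newp p) = take (pos p m) p @ drop (pos q m) (butlast q)"
    using dne unfolding np by (simp add: butlast_append butlast_drop)
  then have "last (butlast (newp p)) = last (butlast q)" using j by simp
  moreover have "last (newp p) = last q" using j1 unfolding np by simp
  ultimately show ?thesis using p by blast
qed

lemma main_pym: "\<exists>R. path_system V F r v R \<and> orthogonal R S \<and> term_edges Q \<subseteq> term_edges R"
proof (intro exI conjI)
  let ?R = "newp ` P"
  show "path_system V F r v ?R"
    unfolding path_system_def
  proof (intro conjI ballI impI)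
    fix a assume "a \<in> ?R" then show "is_path V F r v a" using newp_path by auto
  next
    fix a b assume ab: "a \<in> ?R" "b \<in> ?R" "a \<noteq> b"
    then obtain p1 p2 where "p1 \<in> P" "p2 \<in> P" "a = newp p1" "b = newp p2" "p1 \<noteq> p2" by auto
    then show "set a \<inter> set b \<subseteq> {r, v}" using newp_disj by blast
  qed
  show "orthogonal ?R S"
    unfolding orthogonal_def
  proof (intro conjI ballI subsetI)
    fix a assume "a \<in> ?R"
    then obtain p where p: "p \<in> P" "a = newp p" by auto
    obtain s where "set p \<inter> S = {s}" using P_S p(1) by auto
    then have "set a \<inter> S = {s}" using newp_S[OF p(1)] p(2) by auto
    then show "card (set a \<inter> S) = 1" by simp
  next
    fix s assume s: "s \<in> S"
    then obtain p where p: "p \<in> P" "s \<in> set p" using S_cover by blast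
    then have "s \<in> set (newp p)" using newp_S[OF p(1) s p(2)] by auto
    then show "s \<in> (\<Union>a\<in>?R. set a)" using p by auto
  qed
  show "term_edges Q \<subseteq> term_edges ?R"
  proof
    fix e assume "e \<in> term_edges Q"
    then obtain q where q: "q \<in> Q" "e = (last (butlast q), last q)" unfolding term_edges_def by auto
    then obtain p where p: "p \<in> P" "last (butlast (newp p)) = last (butlast q)" "last (newp p) = last q"
      using newp_term by blast
    have "newp p \<in> ?R" using p(1) by simp
    moreover have "e = (\<lambda>p. (last (butlast p), last p)) (newp p)" using p q by simp
    ultimately show "e \<in> term_edges ?R" unfolding term_edges_def by blast
  qed
qed

end

theorem lemma2p4:
  fixes V :: "'a set" and E :: "('a \<times> 'a) set" and r v :: 'a
  assumes "digraph V E" and "r \<in> V" and "v \<in> V" and "v \<noteq> r"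
    and "I \<in> gens V (E - {(r, v)}) r v"
    and "S \<in> EM_seps V E r v"
  shows "\<exists>R \<in> EM_paths V E r v. orthogonal R S \<and> I \<subseteq> term_edges R"
proof -
  obtain Q where Q: "path_system V (E - {(r, v)}) r v Q" "term_edges Q = I"
    using assms(5) unfolding gens_def by auto
  have sep: "separation V (E - {(r, v)}) r v S" and
    "\<exists>P. path_system V (E - {(r, v)}) r v P \<and> orthogonal P S"
    using assms(6) unfolding EM_seps_def EM_separation_def by auto
  then obtain P where P: "path_system V (E - {(r, v)}) r v P" "orthogonal P S" by auto
  interpret pym V "E - {(r, v)}" r v P Q S using sep P Q by unfold_locales
  obtain R where R: "path_system V (E - {(r, v)}) r v R" "orthogonal R S" "term_edges Q \<subseteq> term_edges R"
    using main_pym by blast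
  have "R \<in> EM_paths V E r v" unfolding EM_paths_def EM_path_system_def using R sep by auto
  then show ?thesis using R Q by auto
qed

end
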